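(* Let $G$ be a group with a finite generating set $X$, and let $g\in G$ have infinite order. Then, with respect to the word metric of $X$, $t(g^\infty,g^{-\infty})\ge 1/\sqrt2$, equivalently $s(g^\infty,g^{-\infty})\ge 1/2$.
   Context: $d$ is the word metric of $G$ with respect to $X$ ($d(g,h)$ = length of a shortest word over $X\cup X^{-1}$ representing $g^{-1}h$). For $g$ of infinite order, $g^\infty=\{g^n:n\in\mathbb N\}$ and $g^{-\infty}=(g^{-1})^\infty=\{g^{-n}:n\in\mathbb N\}$. For $\alpha>0$, $c\in\mathbb N$, the $(\alpha,c)$-cone around $g^\infty$ is $\alpha\cdot g^\infty+c=\{v\in G:\exists n\in\mathbb N,\ d(v,g^n)\le\alpha\, d(1,g^n)+c\}$; for a forward orbit $x$ write $x\subseteq\alpha\cdot y+c$ if every element of $x$ lies in the cone around $y$. Define $s(x,y)=\inf\{\alpha>0:\exists c\in\mathbb N,\ x\subseteq\alpha\cdot y+c\text{ and }y\subseteq\alpha\cdot x+c\}$ and $t(x,y)=\sqrt{s(x,y)}$. *)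

theory Defs
  imports "HOL-Algebra.Generated_Groups" Complex_Main
begin

definition word_prod :: "('a, 'b) monoid_scheme \<Rightarrow> 'a list \<Rightarrow> 'a" where
  "word_prod G ws = foldr (\<lambda>x y. x \<otimes>\<^bsub>G\<^esub> y) ws \<one>\<^bsub>G\<^esub>"

definition word_length :: "('a, 'b) monoid_scheme \<Rightarrow> 'a set \<Rightarrow> 'a \<Rightarrow> nat" where
  "word_length G X h = (LEAST n. \<exists>ws. set ws \<subseteq> X \<union> (\<lambda>x. inv\<^bsub>G\<^esub> x) ` X
                                   \<and> length ws = n \<and> word_prod G ws = h)"

definition word_dist :: "('a, 'b) monoid_scheme \<Rightarrow> 'a set \<Rightarrow> 'a \<Rightarrow> 'a \<Rightarrow> nat" where
  "word_dist G X g h = word_length G X (inv\<^bsub>G\<^esub> g \<otimes>\<^bsub>G\<^esub> h)"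

definition fwd_orbit :: "('a, 'b) monoid_scheme \<Rightarrow> 'a \<Rightarrow> 'a set" where
  "fwd_orbit G g = {g [^]\<^bsub>G\<^esub> (n::nat) | n. True}"

definition cone :: "('a, 'b) monoid_scheme \<Rightarrow> 'a set \<Rightarrow> real \<Rightarrow> nat \<Rightarrow> 'a \<Rightarrow> 'a set" where
  "cone G X \<alpha> c g = {v \<in> carrier G. \<exists>n::nat.
      real (word_dist G X v (g [^]\<^bsub>G\<^esub> n))
        \<le> \<alpha> * real (word_dist G X \<one>\<^bsub>G\<^esub> (g [^]\<^bsub>G\<^esub> n)) + real c}"

definition s_orb :: "('a, 'b) monoid_scheme \<Rightarrow> 'a set \<Rightarrow> 'a \<Rightarrow> 'a \<Rightarrow> real" where
  "s_orb G X g h = Inf {\<alpha>. \<alpha> > 0 \<and> (\<exists>c::nat.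
       fwd_orbit G g \<subseteq> cone G X \<alpha> c h \<and> fwd_orbit G h \<subseteq> cone G X \<alpha> c g)}"

definition t_orb :: "('a, 'b) monoid_scheme \<Rightarrow> 'a set \<Rightarrow> 'a \<Rightarrow> 'a \<Rightarrow> real" where
  "t_orb G X g h = sqrt (s_orb G X g h)"

end

theory Submission
  imports Defs
begin

context group
begin

lemma wp_closed: "set ws \<subseteq> carrier G \<Longrightarrow> word_prod G ws \<in> carrier G"
  by (induction ws) (auto simp: word_prod_def)

lemma wp_append: "set xs \<subseteq> carrier G \<Longrightarrow> set ys \<subseteq> carrier G \<Longrightarrow>
   word_prod G (xs @ ys) = word_prod G xs \<otimes> word_prod G ys"
proof (induction xs)
  case Nil then show ?case by (simp add: word_prod_def wp_closed[unfolded word_prod_def])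
next
  case (Cons a xs)
  then show ?case
    using wp_closed[of xs] wp_closed[of ys] by (simp add: word_prod_def m_assoc)
qed

lemma wp_inv: "set ws \<subseteq> carrier G \<Longrightarrow> word_prod G (rev (map (\<lambda>x. inv x) ws)) = inv (word_prod G ws)"
proof (induction ws)
  case Nil then show ?case by (simp add: word_prod_def)
next
  case (Cons a ws)
  have "word_prod G (rev (map (\<lambda>x. inv x) (a # ws))) = word_prod G (rev (map (\<lambda>x. inv x) ws) @ [inv a])" by simp
  also have "\<dots> = word_prod G (rev (map (\<lambda>x. inv x) ws)) \<otimes> word_prod G [inv a]"
    using Cons by (intro wp_append) auto
  also have "\<dots> = inv (word_prod G ws) \<otimes> inv a" using Cons by (simp add: word_prod_def)
  also have "\<dots> = inv (a \<otimes> word_prod G ws)" using Cons wp_closed[of ws] by (simp add: inv_mult_group)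
  finally show ?case by (simp add: word_prod_def)
qed

lemma exists_word:
  assumes "X \<subseteq> carrier G" "h \<in> generate G X"
  shows "\<exists>ws. set ws \<subseteq> X \<union> (\<lambda>x. inv x) ` X \<and> word_prod G ws = h"
  using assms(2)
proof (induction rule: generate.induct)
  case one then show ?case by (intro exI[of _ "[]"]) (simp add: word_prod_def)
next
  case (incl h) then show ?case using assms(1) by (intro exI[of _ "[h]"]) (auto simp: word_prod_def)
next
  case (inv h) then show ?case using assms(1) by (intro exI[of _ "[inv h]"]) (auto simp: word_prod_def)
next
  case (eng h1 h2)
  then obtain w1 w2 where "set w1 \<subseteq> X \<union> (\<lambda>x. inv x) ` X" "word_prod G w1 = h1"
    "set w2 \<subseteq> X \<union> (\<lambda>x. inv x) ` X" "word_prod G w2 = h2" by blast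
  moreover have "X \<union> (\<lambda>x. inv x) ` X \<subseteq> carrier G" using assms(1) by auto
  ultimately have "set w1 \<subseteq> carrier G" "set w2 \<subseteq> carrier G" "word_prod G w1 = h1" "word_prod G w2 = h2"
     "set (w1 @ w2) \<subseteq> X \<union> (\<lambda>x. inv x) ` X" by auto
  then show ?case by (intro exI[of _ "w1 @ w2"]) (auto simp: wp_append)
qed

lemma wl_attained:
  assumes "X \<subseteq> carrier G" "generate G X = carrier G" "h \<in> carrier G"
  shows "\<exists>ws. set ws \<subseteq> X \<union> (\<lambda>x. inv x) ` X \<and> length ws = word_length G X h \<and> word_prod G ws = h"
proof -
  obtain ws where "set ws \<subseteq> X \<union> (\<lambda>x. inv x) ` X \<and> word_prod G ws = h" using exists_word assms by blast
  then have "\<exists>n ws. set ws \<subseteq> X \<union> (\<lambda>x. inv x) ` X \<and> length ws = n \<and> word_prod G ws = h" by blast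
  then show ?thesis unfolding word_length_def by (rule LeastI_ex)
qed

lemma wl_le:
  assumes "set ws \<subseteq> X \<union> (\<lambda>x. inv x) ` X" "word_prod G ws = h"
  shows "word_length G X h \<le> length ws"
  unfolding word_length_def using assms by (intro Least_le) blast

lemma wl_mult:
  assumes "X \<subseteq> carrier G" "generate G X = carrier G" "a \<in> carrier G" "b \<in> carrier G"
  shows "word_length G X (a \<otimes> b) \<le> word_length G X a + word_length G X b"
proof -
  obtain wa where wa: "set wa \<subseteq> X \<union> (\<lambda>x. inv x) ` X" "length wa = word_length G X a" "word_prod G wa = a"
    using wl_attained assms by blast
  obtain wb where wb: "set wb \<subseteq> X \<union> (\<lambda>x. inv x) ` X" "length wb = word_length G X b" "word_prod G wb = b"
    using wl_attained assms by blast
  have Y: "X \<union> (\<lambda>x. inv x) ` X \<subseteq> carrier G" using assms(1) by auto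
  have "set wa \<subseteq> carrier G" "set wb \<subseteq> carrier G" using wa wb Y by auto
  then have "word_prod G (wa @ wb) = a \<otimes> b" using wa wb by (simp add: wp_append)
  then have "word_length G X (a \<otimes> b) \<le> length (wa @ wb)" using wa wb by (intro wl_le) auto
  then show ?thesis using wa wb by simp
qed

lemma wl_inv_le:
  assumes "X \<subseteq> carrier G" "generate G X = carrier G" "a \<in> carrier G"
  shows "word_length G X (inv a) \<le> word_length G X a"
proof -
  obtain wa where wa: "set wa \<subseteq> X \<union> (\<lambda>x. inv x) ` X" "length wa = word_length G X a" "word_prod G wa = a"
    using wl_attained assms by blast
  have Y: "X \<union> (\<lambda>x. inv x) ` X \<subseteq> carrier G" using assms(1) by auto
  have "set (rev (map (\<lambda>x. inv x) wa)) \<subseteq> X \<union> (\<lambda>x. inv x) ` X"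
  proof
    fix y assume "y \<in> set (rev (map (\<lambda>x. inv x) wa))"
    then obtain x where x: "x \<in> set wa" "y = inv x" by auto
    then have "x \<in> X \<or> x \<in> (\<lambda>x. inv x) ` X" using wa by auto
    then show "y \<in> X \<union> (\<lambda>x. inv x) ` X" using x assms(1) by auto
  qed
  moreover have "set wa \<subseteq> carrier G" using wa Y by auto
  moreover have "word_prod G (rev (map (\<lambda>x. inv x) wa)) = inv a" using wa calculation by (simp add: wp_inv)
  ultimately have "word_length G X (inv a) \<le> length (rev (map (\<lambda>x. inv x) wa))" by (intro wl_le)
  then show ?thesis using wa by simp
qed

lemma wl_inv:
  assumes "X \<subseteq> carrier G" "generate G X = carrier G" "a \<in> carrier G"
  shows "word_length G X (inv a) = word_length G X a"
  using wl_inv_le[OF assms] wl_inv_le[OF assms(1,2), of "inv a"] assms by simp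

lemma ball_finite:
  assumes "X \<subseteq> carrier G" "generate G X = carrier G" "finite X"
  shows "finite {h \<in> carrier G. word_length G X h \<le> K}"
proof -
  have "{h \<in> carrier G. word_length G X h \<le> K} \<subseteq> word_prod G ` {ws. set ws \<subseteq> X \<union> (\<lambda>x. inv x) ` X \<and> length ws \<le> K}"
  proof
    fix h assume "h \<in> {h \<in> carrier G. word_length G X h \<le> K}"
    then obtain ws where "set ws \<subseteq> X \<union> (\<lambda>x. inv x) ` X" "length ws = word_length G X h" "word_prod G ws = h"
      "word_length G X h \<le> K"
      using wl_attained[OF assms(1,2)] by blast
    then show "h \<in> word_prod G ` {ws. set ws \<subseteq> X \<union> (\<lambda>x. inv x) ` X \<and> length ws \<le> K}" by force
  qed
  moreover have "finite {ws. set ws \<subseteq> X \<union> (\<lambda>x. inv x) ` X \<and> length ws \<le> K}"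
    using assms(3) by (intro finite_lists_length_le) auto
  ultimately show ?thesis by (meson finite_imageI finite_subset)
qed

lemma pow_inj:
  assumes "g \<in> carrier G" "\<forall>n::nat. n > 0 \<longrightarrow> g [^] n \<noteq> \<one>"
  shows "inj (\<lambda>k::nat. g [^] k)"
proof (rule injI)
  have *: "i < j \<Longrightarrow> g [^] i \<noteq> g [^] j" for i j :: nat
  proof
    assume "i < j" "g [^] i = g [^] j"
    have "g [^] i \<otimes> g [^] (j - i) = g [^] (i + (j - i))"
      using assms(1) by (simp add: nat_pow_mult)
    also have "\<dots> = g [^] i \<otimes> \<one>" using \<open>i < j\<close> \<open>g [^] i = g [^] j\<close> assms(1) by simp
    finally have "g [^] i \<otimes> g [^] (j - i) = g [^] i \<otimes> \<one>" .
    then have "g [^] (j - i) = \<one>" using assms(1) by simp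
    then show False using assms(2) \<open>i < j\<close> by auto
  qed
  fix i j :: nat assume "g [^] i = g [^] j"
  then show "i = j" using *[of i j] *[of j i] by (metis linorder_neqE_nat)
qed

end

theorem theorem1p2:
  fixes G (structure) and X :: "'a set" and g :: 'a
  assumes "group G"
    and "X \<subseteq> carrier G" and "finite X" and "generate G X = carrier G"
    and "g \<in> carrier G"
    and "\<forall>n::nat. n > 0 \<longrightarrow> g [^] n \<noteq> \<one>"
  shows "t_orb G X g (inv g) \<ge> 1 / sqrt 2 \<and> s_orb G X g (inv g) \<ge> 1 / 2"
proof -
  interpret group G by fact
  define L where "L k = word_length G X (g [^] k)" for k :: nat
  have pc: "g [^] k \<in> carrier G" for k :: nat using assms(5) by simp
  have Linv: "word_length G X (inv (g [^] k)) = L k" for k :: nat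
    unfolding L_def using wl_inv[OF assms(2,4) pc] .
  have d1: "word_dist G X \<one> h = word_length G X h" if "h \<in> carrier G" for h
    unfolding word_dist_def using that by simp
  have igp: "inv g [^] k = inv (g [^] k)" for k :: nat using nat_pow_inv[OF assms(5)] .
  define S where "S = {\<alpha>. \<alpha> > 0 \<and> (\<exists>c::nat.
       fwd_orbit G g \<subseteq> cone G X \<alpha> c (inv g) \<and> fwd_orbit G (inv g) \<subseteq> cone G X \<alpha> c g)}"
  have sdef: "s_orb G X g (inv g) = Inf S" unfolding s_orb_def S_def ..
  have L2: "word_length G X (g [^] m \<otimes> g [^] m) \<le> 2 * L m" for m :: nat
    using wl_mult[OF assms(2,4) pc[of m] pc[of m]] unfolding L_def by linarith
  have "2 \<in> S"
  proof -
    have "fwd_orbit G g \<subseteq> cone G X 2 0 (inv g)"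
    proof
      fix v assume "v \<in> fwd_orbit G g"
      then obtain m :: nat where v: "v = g [^] m" unfolding fwd_orbit_def by blast
      have "inv v \<otimes> inv g [^] m = inv (g [^] m \<otimes> g [^] m)"
        using v igp pc by (simp add: inv_mult_group)
      then have "real (word_dist G X v (inv g [^] m)) \<le> 2 * real (word_dist G X \<one> (inv g [^] m)) + real 0"
      proof -
        have e: "g [^] m \<otimes> g [^] m = g [^] (m+m)" using assms(5) by (simp add: nat_pow_mult)
        show ?thesis
        using L2[of m] Linv[of m] Linv[of "m+m"] d1[of "inv g [^] m"] igp[of m] pc[of m] L_def[of "m+m"]
          \<open>inv v \<otimes> inv g [^] m = inv (g [^] m \<otimes> g [^] m)\<close>
        unfolding word_dist_def e by simp
      qed
      then show "v \<in> cone G X 2 0 (inv g)" unfolding cone_def using v pc by auto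
    qed
    moreover have "fwd_orbit G (inv g) \<subseteq> cone G X 2 0 g"
    proof
      fix v assume "v \<in> fwd_orbit G (inv g)"
      then obtain m :: nat where v: "v = inv (g [^] m)" unfolding fwd_orbit_def using igp by blast
      have "inv v \<otimes> g [^] m = g [^] m \<otimes> g [^] m" using v pc by simp
      then have "real (word_dist G X v (g [^] m)) \<le> 2 * real (word_dist G X \<one> (g [^] m)) + real 0"
        using L2[of m] pc[of m] unfolding word_dist_def L_def by simp
      then show "v \<in> cone G X 2 0 g" unfolding cone_def using v pc by auto
    qed
    ultimately show ?thesis unfolding S_def by auto
  qed
  have lb: "\<alpha> \<ge> 1/2" if "\<alpha> \<in> S" for \<alpha>
  proof (rule ccontr)
    assume "\<not> \<alpha> \<ge> 1/2"
    then have al: "\<alpha> < 1/2" by simp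
    from that obtain c :: nat where a0: "\<alpha> > 0" and inc: "fwd_orbit G g \<subseteq> cone G X \<alpha> c (inv g)"
      unfolding S_def by auto
    define K where "K = real c / (1 - 2 * \<alpha>)"
    have step: "\<exists>n. L (n + m) < L m" if "real (L m) > K" for m :: nat
    proof -
      have "g [^] m \<in> cone G X \<alpha> c (inv g)" using inc unfolding fwd_orbit_def by blast
      then obtain n :: nat where n: "real (word_dist G X (g [^] m) (inv g [^] n))
          \<le> \<alpha> * real (word_dist G X \<one> (inv g [^] n)) + real c"
        unfolding cone_def by blast
      have e1: "inv (g [^] m) \<otimes> inv g [^] n = inv (g [^] (n + m))"
      proof -
        have "g [^] (n + m) = g [^] n \<otimes> g [^] m" using assms(5) by (simp add: nat_pow_mult)
        then show ?thesis using igp pc by (simp add: inv_mult_group)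
      qed
      have A: "real (L (n+m)) \<le> \<alpha> * real (L n) + c"
        using n e1 d1[of "inv g [^] n"] Linv[of n] Linv[of "n+m"] igp[of n] pc[of n]
        unfolding word_dist_def by simp
      have e2: "g [^] (n + m) \<otimes> inv (g [^] m) = g [^] n"
      proof -
        have "g [^] (n + m) = g [^] n \<otimes> g [^] m" using assms(5) by (simp add: nat_pow_mult)
        then show ?thesis using pc by (simp add: m_assoc)
      qed
      have "L n \<le> L (n+m) + L m"
        using wl_mult[OF assms(2,4) pc[of "n+m"] inv_closed[OF pc[of m]]] e2 Linv[of m]
        unfolding L_def by simp
      then have B: "real (L n) \<le> real (L (n+m)) + real (L m)" by linarith
      have "real (L (n+m)) \<le> \<alpha> * real (L (n+m)) + \<alpha> * real (L m) + c"
        using A B a0 by (smt (verit) mult_left_mono distrib_left)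
      then have C: "(1 - \<alpha>) * real (L (n+m)) \<le> \<alpha> * real (L m) + c" by (simp add: algebra_simps)
      have "real c < (1 - 2*\<alpha>) * real (L m)" using that al unfolding K_def
        by (simp add: pos_divide_less_eq mult.commute)
      then have "(1 - \<alpha>) * real (L (n+m)) < (1 - \<alpha>) * real (L m)" using C by (simp add: algebra_simps)
      then have "real (L (n+m)) < real (L m)" using al by (simp add: mult_less_cancel_left)
      then show ?thesis by auto
    qed
    have "finite ((\<lambda>k::nat. g [^] k) -` {h \<in> carrier G. word_length G X h \<le> nat \<lceil>K\<rceil>})"
      by (intro finite_vimageI ball_finite assms pow_inj)
    moreover have "{k. real (L k) \<le> K} \<subseteq> (\<lambda>k::nat. g [^] k) -` {h \<in> carrier G. word_length G X h \<le> nat \<lceil>K\<rceil>}"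
      using pc unfolding L_def by auto linarith
    ultimately have "finite {k. real (L k) \<le> K}" by (rule finite_subset[rotated])
    then obtain m0 where m0: "{k. real (L k) \<le> K} \<subseteq> {..<m0}" by (auto simp: finite_nat_set_iff_bounded lessThan_def)
    obtain ms where ms: "ms \<ge> m0" "\<forall>y. y \<ge> m0 \<longrightarrow> L ms \<le> L y"
      using ex_has_least_nat[of "\<lambda>k. k \<ge> m0" m0 L] by auto
    have "real (L ms) > K" proof (rule ccontr)
      assume "\<not> K < real (L ms)"
      then have "ms \<in> {k. real (L k) \<le> K}" by simp
      then show False using m0 ms(1) by auto
    qed
    then obtain n where "L (n + ms) < L ms" using step by blast
    moreover have "L ms \<le> L (n + ms)" using ms by auto
    ultimately show False by simp
  qed
  have s: "s_orb G X g (inv g) \<ge> 1/2" unfolding sdef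
    using \<open>2 \<in> S\<close> lb by (intro cInf_greatest) auto
  have "sqrt (1/2) \<le> sqrt (s_orb G X g (inv g))" using s by simp
  moreover have "sqrt (1/2) = 1 / sqrt (2::real)" by (simp add: real_sqrt_divide)
  ultimately show ?thesis using s unfolding t_orb_def by simp
qed

end
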